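(* In the completion $\widehat{\mathbf{Sym}}$ (formal infinite sums of homogeneous elements), let $\mathbf{t}=\sum_{k\ge0}(-1)^kT_{2k+1}$ with $T_{2k+1}=R_{(2^k,1)}$, and let $\tilde\sigma_1=\sum_{n\ge0}\tilde S_n$. Then $\tilde\sigma_1=(1+\mathbf{t})(1-\mathbf{t})^{-1}$, and $$\log\tilde\sigma_1=\log(1+\mathbf{t})-\log(1-\mathbf{t})=2\sum_{k\ge0}\frac{\mathbf{t}^{2k+1}}{2k+1}=2\sum_{I}\frac{(-1)^{(|I|-\ell(I))/2}}{\ell(I)}\,T^I,$$ where the last sum runs over all compositions $I$ with all parts odd and with an odd number of parts $\ell(I)$, $|I|$ is the sum of the parts of $I$, and $T^I=T_{i_1}\cdots T_{i_r}$.
   Context: $\mathbf{Sym}$ is the free associative $\mathbb{Q}$-algebra on $S_1,S_2,\dots$ ($S_0=1$, $\deg S_n=n$). Ribbons $R_J$ are defined by $S_{i_1}\cdots S_{i_r}=\sum_{J\models n,\ \operatorname{Des}(J)\subseteq\operatorname{Des}(I)}R_J$, where $\operatorname{Des}(I)$ is the set of partial sums $i_1,\dots,i_1+\cdots+i_{r-1}$. $\Lambda_n=R_{(1^n)}$, $\Lambda_0=1$, and $\tilde S_n=\sum_{k=0}^n\Lambda_kS_{n-k}$ (so $\tilde S_0=1$). $(2^k,1)$ is the composition with $k$ parts $2$ followed by a part $1$. *)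

theory Defs
  imports Complex_Main "HOL-Library.Function_Algebras" "HOL-Library.Groups_Big_Fun"
begin

text \<open>Model of the completion of Sym: an element is the family of its coefficients
  in the basis S^I (I a composition, i.e. a list of positive naturals).
  Coefficients at lists containing 0 are meaningless and are 0 for all elements built here.
  Addition/subtraction are pointwise (Function_Algebras); the product is concatenation
  product (Sym is free on S_1, S_2, ...).\<close>

type_synonym ncsf = "nat list \<Rightarrow> rat"

definition comps :: "nat \<Rightarrow> nat list set" where
  "comps n = {I. sum_list I = n \<and> 0 \<notin> set I}"

definition nc_one :: ncsf where
  "nc_one = (\<lambda>K. if K = [] then 1 else 0)"

definition nc_mult :: "ncsf \<Rightarrow> ncsf \<Rightarrow> ncsf" where
  "nc_mult f g = (\<lambda>K. \<Sum>i\<le>length K. f (take i K) * g (drop i K))"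

definition nc_smult :: "rat \<Rightarrow> ncsf \<Rightarrow> ncsf" where
  "nc_smult c f = (\<lambda>K. c * f K)"

primrec nc_pow :: "ncsf \<Rightarrow> nat \<Rightarrow> ncsf" where
  "nc_pow f 0 = nc_one"
| "nc_pow f (Suc n) = nc_mult f (nc_pow f n)"

definition nc_sum_set :: "'a set \<Rightarrow> ('a \<Rightarrow> ncsf) \<Rightarrow> ncsf" where
  "nc_sum_set A F = (\<lambda>K. Sum_any (\<lambda>a. if a \<in> A then F a K else 0))"

abbreviation nc_sum :: "('a \<Rightarrow> ncsf) \<Rightarrow> ncsf" where
  "nc_sum F \<equiv> nc_sum_set UNIV F"

definition nc_invertible :: "ncsf \<Rightarrow> bool" where
  "nc_invertible f \<longleftrightarrow> (\<exists>g. nc_mult f g = nc_one \<and> nc_mult g f = nc_one)"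

definition nc_inv :: "ncsf \<Rightarrow> ncsf" where
  "nc_inv f = (THE g. nc_mult f g = nc_one \<and> nc_mult g f = nc_one)"

definition nc_log :: "ncsf \<Rightarrow> ncsf" where
  "nc_log f = nc_sum (\<lambda>n::nat. if n = 0 then 0
       else nc_smult ((-1) ^ (n + 1) / of_nat n) (nc_pow (f - nc_one) n))"

definition S :: "nat \<Rightarrow> ncsf" where
  "S n = (if n = 0 then nc_one else (\<lambda>K. if K = [n] then 1 else 0))"

definition SI :: "nat list \<Rightarrow> ncsf" where
  "SI I = foldr (\<lambda>i acc. nc_mult (S i) acc) I nc_one"

definition Des :: "nat list \<Rightarrow> nat set" where
  "Des I = {sum_list (take j I) | j. 0 < j \<and> j < length I}"

definition ribbons :: "nat list \<Rightarrow> ncsf" where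
  "ribbons = (THE R. (\<forall>n. \<forall>I\<in>comps n. SI I = (\<Sum>J\<in>{J\<in>comps n. Des J \<subseteq> Des I}. R J))
                  \<and> (\<forall>J. 0 \<in> set J \<longrightarrow> R J = 0))"

abbreviation R :: "nat list \<Rightarrow> ncsf" where
  "R J \<equiv> ribbons J"

definition Lam :: "nat \<Rightarrow> ncsf" where
  "Lam n = (if n = 0 then nc_one else R (replicate n 1))"

definition St :: "nat \<Rightarrow> ncsf" where
  "St n = (\<Sum>k\<le>n. nc_mult (Lam k) (S (n - k)))"

definition T :: "nat \<Rightarrow> ncsf" where
  "T i = R (replicate ((i - 1) div 2) 2 @ [1])"

definition TI :: "nat list \<Rightarrow> ncsf" where
  "TI I = foldr (\<lambda>i acc. nc_mult (T i) acc) I nc_one"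

definition tt :: ncsf where
  "tt = nc_sum (\<lambda>k::nat. nc_smult ((-1) ^ k) (T (2 * k + 1)))"

definition sigma1t :: ncsf where
  "sigma1t = nc_sum (\<lambda>n::nat. St n)"

end

theory Submission
  imports Defs
begin

lemma mult_Nil: "nc_mult f g [] = f [] * g []"
  by (simp add: nc_mult_def)

lemma mult_Cons: "nc_mult f g (x # K) = f [] * g (x # K) + nc_mult (\<lambda>L. f (x # L)) g K"
  unfolding nc_mult_def by (simp add: sum.atMost_Suc_shift del: sum.atMost_Suc)

lemma mult_lin_left: "nc_mult (\<lambda>L. c * F L + G L) h K = c * nc_mult F h K + nc_mult G h K"
  unfolding nc_mult_def by (simp add: sum.distrib sum_distrib_left algebra_simps)

lemma mult_lin_right: "nc_mult h (\<lambda>L. c * F L + G L) K = c * nc_mult h F K + nc_mult h G K"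
  unfolding nc_mult_def by (simp add: sum.distrib sum_distrib_left algebra_simps)

lemma mult_zero_left: "nc_mult (\<lambda>L. 0) h K = 0"
  unfolding nc_mult_def by simp

lemma mult_one_left: "nc_mult nc_one g = g"
proof
  fix K show "nc_mult nc_one g K = g K"
    by (cases K) (simp_all add: mult_Nil mult_Cons nc_one_def mult_zero_left)
qed

lemma mult_one_right: "nc_mult f nc_one = f"
proof
  fix K show "nc_mult f nc_one K = f K"
  proof (induction K arbitrary: f)
    case Nil then show ?case by (simp add: mult_Nil nc_one_def)
  next
    case (Cons x K) then show ?case by (simp add: mult_Cons nc_one_def)
  qed
qed

lemma mult_assoc: "nc_mult (nc_mult f g) h = nc_mult f (nc_mult g h)"
proof
  fix K show "nc_mult (nc_mult f g) h K = nc_mult f (nc_mult g h) K"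
  proof (induction K arbitrary: f g h)
    case Nil then show ?case by (simp add: mult_Nil)
  next
    case (Cons x K)
    have d: "(\<lambda>L. nc_mult f g (x # L)) = (\<lambda>L. f [] * g (x # L) + nc_mult (\<lambda>L. f (x # L)) g L)"
      by (simp add: mult_Cons)
    show ?case
      apply (simp add: mult_Cons mult_Nil d mult_lin_left Cons.IH)
      apply (simp add: algebra_simps)
      done
  qed
qed

definition om :: "nat list \<Rightarrow> nat" where "om K = length (filter odd K)"

definition ep :: "nat list \<Rightarrow> rat" where
  "ep K = (if 0 \<in> set K then 0 else if K = [] then 1
           else if odd (last K) then (-1) ^ (length K + sum_list K) else 0)"

lemma ep_Nil[simp]: "ep [] = 1" by (simp add: ep_def)

lemma ep_Cons: "ep (x # K) = (if x = 0 then 0 else if odd x then ep K else if K = [] then 0 else - ep K)"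
proof (cases "K = []")
  case True then show ?thesis by (auto simp: ep_def)
next
  case False
  have p: "(-1::rat) ^ (length K + (x + sum_list K)) = (-1) ^ x * (-1) ^ (length K + sum_list K)"
    by (simp add: power_add algebra_simps)
  show ?thesis using False by (auto simp: ep_def p)
qed

lemma om_Nil[simp]: "om [] = 0" by (simp add: om_def)
lemma om_Cons: "om (x # K) = (if odd x then Suc (om K) else om K)" by (simp add: om_def)

lemma parity_om: "even (sum_list K) \<longleftrightarrow> even (om K)"
  by (induction K) (auto simp: om_Cons)

lemma ep_om: "ep K \<noteq> 0 \<Longrightarrow> K \<noteq> [] \<Longrightarrow> om K > 0"
  by (induction K) (auto simp: ep_Cons om_Cons split: if_splits)

lemma ep_om0: "om K = 0 \<Longrightarrow> K \<noteq> [] \<Longrightarrow> ep K = 0"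
  using ep_om by fastforce

definition Phi :: "(nat \<Rightarrow> rat) \<Rightarrow> ncsf" where "Phi a = (\<lambda>K. a (om K) * ep K)"

definition d0 :: "nat \<Rightarrow> rat" where "d0 m = (if m = 0 then 1 else 0)"

lemma Phi_Cons: "Phi a (x # K) = (if x = 0 then 0 else if odd x then Phi (\<lambda>m. a (Suc m)) K
   else if K = [] then 0 else - Phi a K)"
  by (simp add: Phi_def ep_Cons om_Cons)

lemma Phi_d0: "Phi d0 = nc_one"
proof
  fix K show "Phi d0 K = nc_one K"
    using ep_om0[of K] by (cases "K = []") (auto simp: Phi_def d0_def nc_one_def)
qed

definition cauchy :: "(nat \<Rightarrow> rat) \<Rightarrow> (nat \<Rightarrow> rat) \<Rightarrow> nat \<Rightarrow> rat" where
  "cauchy a b m = (\<Sum>i\<le>m. a i * b (m - i))"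

lemma cauchy_Suc: "cauchy a b (Suc m) = a 0 * b (Suc m) + cauchy (\<lambda>i. a (Suc i)) b m"
  unfolding cauchy_def by (simp add: sum.atMost_Suc_shift del: sum.atMost_Suc)

lemma cauchy_0: "cauchy a b 0 = a 0 * b 0" by (simp add: cauchy_def)

lemma cauchy_lin: "cauchy (\<lambda>m. - a m + c * d0 m) b = (\<lambda>m. - cauchy a b m + c * b m)"
proof
  fix m
  have "cauchy (\<lambda>m. - a m + c * d0 m) b m = (\<Sum>i\<le>m. - (a i * b (m - i)) + (if i = 0 then c * b m else 0))"
    unfolding cauchy_def by (rule sum.cong) (auto simp: d0_def algebra_simps)
  also have "\<dots> = - cauchy a b m + c * b m"
    by (simp add: sum.distrib sum_negf cauchy_def sum_subtractf)
  finally show "cauchy (\<lambda>m. - a m + c * d0 m) b m = - cauchy a b m + c * b m" .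
qed

lemma Phi_mult_pt: "nc_mult (Phi a) (Phi b) K = Phi (cauchy a b) K"
proof (induction K arbitrary: a b)
  case Nil then show ?case by (simp add: mult_Nil Phi_def cauchy_0)
next
  case (Cons x K)
  show ?case
  proof (cases "x = 0")
    case True
    then show ?thesis by (simp add: mult_Cons Phi_Cons mult_zero_left)
  next
    case x0: False
    show ?thesis
    proof (cases "odd x")
      case True
      have e: "(\<lambda>L. Phi a (x # L)) = Phi (\<lambda>m. a (Suc m))" using True x0 by (simp add: Phi_Cons)
      show ?thesis using True x0
        by (simp add: mult_Cons e Cons.IH Phi_Cons, simp add: Phi_def cauchy_Suc algebra_simps)
    next
      case False
      have e: "(\<lambda>L. Phi a (x # L)) = Phi (\<lambda>m. - a m + a 0 * d0 m)"
      proof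
        fix L show "Phi a (x # L) = Phi (\<lambda>m. - a m + a 0 * d0 m) L"
          using False x0 ep_om0[of L] by (cases "L = []") (auto simp: Phi_Cons d0_def, auto simp: Phi_def d0_def)
      qed
      show ?thesis using False x0
        apply (simp only: mult_Cons e Cons.IH cauchy_lin)
        apply (simp add: Phi_Cons)
        apply (cases "K = []")
         apply (simp_all add: Phi_def cauchy_0 algebra_simps d0_def)
        done
    qed
  qed
qed

lemma Phi_mult: "nc_mult (Phi a) (Phi b) = Phi (cauchy a b)"
  using Phi_mult_pt by blast

primrec cpow :: "(nat \<Rightarrow> rat) \<Rightarrow> nat \<Rightarrow> nat \<Rightarrow> rat" where
  "cpow a 0 = d0"
| "cpow a (Suc n) = cauchy a (cpow a n)"

lemma Phi_pow: "nc_pow (Phi a) n = Phi (cpow a n)"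
  by (induction n) (simp_all add: Phi_d0 Phi_mult)

lemma Phi_add: "Phi a + Phi b = Phi (\<lambda>m. a m + b m)"
  by (simp add: Phi_def fun_eq_iff algebra_simps)

lemma Phi_diff: "Phi a - Phi b = Phi (\<lambda>m. a m - b m)"
  by (simp add: Phi_def fun_eq_iff algebra_simps)

lemma Phi_smult: "nc_smult c (Phi a) = Phi (\<lambda>m. c * a m)"
  by (simp add: Phi_def nc_smult_def fun_eq_iff algebra_simps)

lemma Phi_zero: "Phi (\<lambda>m. 0) = 0"
  by (simp add: Phi_def fun_eq_iff)

lemma Sum_any_mult_const: "Sum_any (\<lambda>n. f n * (c::rat)) = Sum_any f * c"
proof (cases "c = 0")
  case True then show ?thesis by simp
next
  case False
  then have "{n. f n * c \<noteq> 0} = {n. f n \<noteq> 0}" by auto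
  then show ?thesis
    by (simp add: Sum_any.expand_set sum_distrib_right)
qed

lemma Phi_sum: "nc_sum (\<lambda>n. Phi (A n)) = Phi (\<lambda>m. Sum_any (\<lambda>n. A n m))"
  by (simp add: nc_sum_set_def Phi_def fun_eq_iff Sum_any_mult_const)

lemma sum_fun_at: "(sum F A) K = sum (\<lambda>J. F J K) A"
  by (induction A rule: infinite_finite_induct) auto

lemma Des_Nil[simp]: "Des [] = {}" by (simp add: Des_def)

lemma Des_Cons: "Des (x # K) = (if K = [] then {} else insert x ((+) x ` Des K))"
proof (cases "K = []")
  case True then show ?thesis by (simp add: Des_def)
next
  case False
  have "Des (x # K) \<subseteq> insert x ((+) x ` Des K)"
  proof
    fix d assume "d \<in> Des (x # K)"
    then obtain j where j: "0 < j" "j < Suc (length K)" "d = sum_list (take j (x # K))"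
      by (auto simp: Des_def)
    then obtain j' where jj: "j = Suc j'" by (cases j) auto
    show "d \<in> insert x ((+) x ` Des K)"
    proof (cases "j' = 0")
      case True then show ?thesis using j jj by simp
    next
      case False
      then have "sum_list (take j' K) \<in> Des K" using j jj by (auto simp: Des_def)
      then show ?thesis using j jj by auto
    qed
  qed
  moreover have "insert x ((+) x ` Des K) \<subseteq> Des (x # K)"
  proof
    fix d assume "d \<in> insert x ((+) x ` Des K)"
    then consider "d = x" | j where "0 < j" "j < length K" "d = x + sum_list (take j K)"
      by (auto simp: Des_def)
    then show "d \<in> Des (x # K)"
    proof cases
      case 1
      have "sum_list (take 1 (x # K)) = x" by simp
      have "0 < (1::nat)" "1 < length (x # K)" using False by auto
      then show ?thesis using 1 \<open>sum_list (take 1 (x # K)) = x\<close> unfolding Des_def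
        by (intro CollectI exI[of _ 1]) auto
    next
      case 2
      have "sum_list (take (Suc j) (x # K)) = d" using 2 by simp
      then show ?thesis using 2 unfolding Des_def by force
    qed
  qed
  ultimately show ?thesis using False by auto
qed

lemma Des_single[simp]: "Des [x] = {}" by (simp add: Des_Cons)

lemma all0_nil: "\<forall>n\<in>set x. n = (0::nat) \<Longrightarrow> 0 \<notin> set x \<Longrightarrow> x = []"
  by (cases x) auto

lemma sum_pos: "0 \<notin> set K \<Longrightarrow> K \<noteq> [] \<Longrightarrow> 0 < sum_list (K::nat list)"
  by (cases K) auto

lemma comps_0: "comps 0 = {[]}"
  by (auto simp: comps_def all0_nil)

lemma length_le_sum: "0 \<notin> set K \<Longrightarrow> length K \<le> sum_list K"
  by (induction K) auto

lemma finite_comps: "finite (comps n)"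
proof -
  have "comps n \<subseteq> {xs. set xs \<subseteq> {..n} \<and> length xs \<le> n}"
    using length_le_sum by (auto simp: comps_def member_le_sum_list)
  then show ?thesis using finite_lists_length_le[of "{..n}" n] finite_subset by blast
qed

lemma finite_Des: "finite (Des K)"
  unfolding Des_def by simp

lemma Des_bound: "0 \<notin> set K \<Longrightarrow> Des K \<subseteq> {0<..<sum_list K}"
proof (induction K)
  case Nil then show ?case by simp
next
  case (Cons x K)
  then show ?case
    using sum_pos[of K] by (cases "K = []") (auto simp: Des_Cons)
qed

lemma card_Des: "0 \<notin> set K \<Longrightarrow> K \<noteq> [] \<Longrightarrow> card (Des K) + 1 = length K"
proof (induction K)
  case Nil then show ?case by simp
next
  case (Cons x K)
  show ?case
  proof (cases "K = []")
    case True then show ?thesis by simp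
  next
    case False
    have "x \<notin> (+) x ` Des K" using Des_bound[of K] Cons.prems by auto
    then have "card (Des (x # K)) = Suc (card (Des K))"
      using False by (simp add: Des_Cons finite_Des card_image)
    then show ?thesis using Cons False by simp
  qed
qed

lemma Des_inj: "J1 \<in> comps n \<Longrightarrow> J2 \<in> comps n \<Longrightarrow> Des J1 = Des J2 \<Longrightarrow> J1 = J2"
proof (induction J1 arbitrary: J2 n)
  case Nil
  then show ?case using all0_nil[of J2] by (auto simp: comps_def)
next
  case (Cons x K1)
  have x0: "x > 0" using Cons.prems by (auto simp: comps_def)
  have "J2 \<noteq> []" using Cons.prems x0 by (auto simp: comps_def)
  then obtain y K2 where J2: "J2 = y # K2" by (cases J2) auto
  have y0: "y > 0" using Cons.prems J2 by (auto simp: comps_def)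
  show ?case
  proof (cases "K1 = []")
    case True
    then have "Des J2 = {}" using Cons.prems by simp
    then have "K2 = []" using J2 by (auto simp: Des_Cons split: if_splits)
    then show ?thesis using Cons.prems J2 True by (auto simp: comps_def)
  next
    case False
    then have "K2 \<noteq> []" using Cons.prems J2 by (auto simp: Des_Cons split: if_splits)
    have e: "insert x ((+) x ` Des K1) = insert y ((+) y ` Des K2)"
      using Cons.prems J2 False \<open>K2 \<noteq> []\<close> by (simp add: Des_Cons)
    have b1: "Des K1 \<subseteq> {0<..}" using Des_bound[of K1] Cons.prems by (auto simp: comps_def)
    have b2: "Des K2 \<subseteq> {0<..}" using Des_bound[of K2] Cons.prems J2 by (auto simp: comps_def)
    have "x \<in> insert y ((+) y ` Des K2)" using e by blast
    then have "x \<ge> y" by auto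
    moreover have "y \<in> insert x ((+) x ` Des K1)" using e by blast
    then have "y \<ge> x" by auto
    ultimately have xy: "x = y" by simp
    have "(+) x ` Des K1 = (+) x ` Des K2"
    proof -
      have "x \<notin> (+) x ` Des K1" "x \<notin> (+) x ` Des K2" using b1 b2 by auto
      then show ?thesis using e xy by (simp add: insert_ident)
    qed
    then have "Des K1 = Des K2" by (simp add: inj_image_eq_iff)
    moreover have "K1 \<in> comps (n - x)" "K2 \<in> comps (n - x)" using Cons.prems J2 xy by (auto simp: comps_def)
    ultimately have "K1 = K2" using Cons.IH[of "n - x" K2] by blast
    then show ?thesis using J2 xy by simp
  qed
qed

lemma Des_surj: "n > 0 \<Longrightarrow> D \<subseteq> {0<..<n} \<Longrightarrow> \<exists>J\<in>comps n. Des J = D"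
proof (induction n arbitrary: D rule: less_induct)
  case (less n)
  show ?case
  proof (cases "D = {}")
    case True
    then show ?thesis using less.prems by (intro bexI[of _ "[n]"]) (auto simp: comps_def)
  next
    case False
    have fD: "finite D" using less.prems finite_subset by blast
    define a where "a = Min D"
    have aD: "a \<in> D" using False fD a_def by simp
    have amin: "\<And>d. d \<in> D \<Longrightarrow> a \<le> d" using fD a_def by simp
    have a0: "0 < a" "a < n" using aD less.prems by auto
    define D' where "D' = (\<lambda>d. d - a) ` (D - {a})"
    have "D' \<subseteq> {0<..<n - a}"
    proof
      fix e assume "e \<in> D'"
      then obtain d where d: "d \<in> D" "d \<noteq> a" "e = d - a" unfolding D'_def by auto
      then have "a < d" using amin le_neq_implies_less by blast
      moreover have "d < n" using less.prems d by auto
      ultimately show "e \<in> {0<..<n - a}" using d by auto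
    qed
    then obtain J' where J': "J' \<in> comps (n - a)" "Des J' = D'"
      using less.IH[of "n - a" D'] a0 by auto
    have "J' \<noteq> []" using J' a0 by (auto simp: comps_def)
    have "(+) a ` D' = D - {a}"
    proof -
      have "(\<lambda>x. a + (x - a)) ` (D - {a}) = id ` (D - {a})"
        using amin by (intro image_cong) auto
      then show ?thesis unfolding D'_def image_image by simp
    qed
    then have "Des (a # J') = D" using \<open>J' \<noteq> []\<close> J' aD by (auto simp: Des_Cons)
    moreover have "a # J' \<in> comps n" using J' a0 by (auto simp: comps_def)
    ultimately show ?thesis by blast
  qed
qed

definition Rx :: "nat list \<Rightarrow> ncsf" where
  "Rx J = (\<lambda>K. if 0 \<notin> set J \<and> K \<in> comps (sum_list J) \<and> Des K \<subseteq> Des J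
                 then (-1) ^ (length J + length K) else 0)"

lemma mult_S: "i > 0 \<Longrightarrow> nc_mult (S i) g K = (case K of [] \<Rightarrow> 0 | x # L \<Rightarrow> if x = i then g L else 0)"
proof (cases K)
  case Nil
  assume "i > 0" then show ?thesis using Nil by (simp add: mult_Nil S_def)
next
  case (Cons x L)
  assume i: "i > 0"
  have e: "(\<lambda>M. S i (x # M)) = (if x = i then nc_one else (\<lambda>M. 0))"
    using i by (auto simp: S_def nc_one_def fun_eq_iff)
  show ?thesis using i Cons by (simp add: mult_Cons e mult_one_left mult_zero_left) (simp add: S_def)
qed

lemma SI_ind: "0 \<notin> set I \<Longrightarrow> SI I = (\<lambda>K. if K = I then 1 else 0)"
proof (induction I)
  case Nil then show ?case by (simp add: SI_def nc_one_def)
next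
  case (Cons i I)
  have "SI (i # I) = nc_mult (S i) (SI I)" by (simp add: SI_def)
  then show ?case using Cons by (auto simp: fun_eq_iff mult_S split: list.splits)
qed

lemma alt_sum:
  assumes "finite B"
  shows "(\<Sum>D\<in>{D. D \<subseteq> B \<and> A \<subseteq> D}. (-1::rat) ^ card D) = (if A = B then (-1) ^ card B else 0)"
proof -
  consider "A = B" | "A \<subset> B" | "\<not> A \<subseteq> B" by blast
  then show ?thesis
  proof cases
    case 1
    then have "{D. D \<subseteq> B \<and> A \<subseteq> D} = {B}" by auto
    then have "(\<Sum>D\<in>{D. D \<subseteq> B \<and> A \<subseteq> D}. (-1::rat) ^ card D) = (-1) ^ card B" by simp
    then show ?thesis using 1 by (simp only: if_P)
  next
    case 2
    have f: "finite {D. D \<subseteq> B \<and> A \<subseteq> D}"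
      by (rule finite_subset[of _ "Pow B"]) (use assms in auto)
    have c: "card {T. T \<subseteq> B \<and> A \<subseteq> T \<and> even (card T)} = card {T. T \<subseteq> B \<and> A \<subseteq> T \<and> odd (card T)}"
      by (rule card_subsupersets_even_odd[OF assms 2])
    have e1: "{x. x \<in> {D. D \<subseteq> B \<and> A \<subseteq> D} \<and> even (card x)} = {T. T \<subseteq> B \<and> A \<subseteq> T \<and> even (card T)}" by blast
    have e2: "{x. x \<in> {D. D \<subseteq> B \<and> A \<subseteq> D} \<and> odd (card x)} = {T. T \<subseteq> B \<and> A \<subseteq> T \<and> odd (card T)}" by blast
    have "(\<Sum>D\<in>{D. D \<subseteq> B \<and> A \<subseteq> D}. (-1::rat) ^ card D) = 0"
      by (rule sum_alternating_cancels[OF f]) (simp only: e1 e2 c)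
    moreover have "A \<noteq> B" using 2 by blast
    ultimately show ?thesis by (simp only: if_not_P if_False)
  next
    case 3
    then have "{D. D \<subseteq> B \<and> A \<subseteq> D} = {}" by auto
    moreover have "A \<noteq> B" using 3 by blast
    ultimately show ?thesis by (simp only: if_not_P if_False sum.empty)
  qed
qed

lemma Rx_prop: "I \<in> comps n \<Longrightarrow> SI I = (\<Sum>J\<in>{J\<in>comps n. Des J \<subseteq> Des I}. Rx J)"
proof
  fix K assume I: "I \<in> comps n"
  have I0: "0 \<notin> set I" using I by (simp add: comps_def)
  have lhs: "SI I K = (if K = I then 1 else 0)" using SI_ind[OF I0] by simp
  have rhs: "(\<Sum>J\<in>{J\<in>comps n. Des J \<subseteq> Des I}. Rx J) K = (\<Sum>J\<in>{J\<in>comps n. Des J \<subseteq> Des I}. Rx J K)"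
    by (rule sum_fun_at)
  show "SI I K = (\<Sum>J\<in>{J\<in>comps n. Des J \<subseteq> Des I}. Rx J) K"
  proof (cases "K \<in> comps n")
    case False
    then have "K \<noteq> I" using I by auto
    moreover have "\<And>J. J \<in> comps n \<Longrightarrow> Rx J K = 0" using False by (auto simp: Rx_def comps_def)
    ultimately show ?thesis using lhs rhs by simp
  next
    case K: True
    show ?thesis
    proof (cases "n = 0")
      case True
      then have "K = []" "I = []" using K I by (auto simp: comps_0)
      moreover have "{J\<in>comps n. Des J \<subseteq> Des I} = {[]}" using True by (auto simp: comps_0)
      ultimately show ?thesis using lhs rhs by (simp add: Rx_def comps_0 True)
    next
      case n0: False
      let ?A = "{J\<in>comps n. Des J \<subseteq> Des I}"
      let ?g = "\<lambda>D. if Des K \<subseteq> D then (-1::rat) ^ (card D + card (Des K)) else 0"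
      have nonemp: "\<And>J. J \<in> comps n \<Longrightarrow> J \<noteq> []" using n0 by (auto simp: comps_def)
      have lenc: "\<And>J. J \<in> comps n \<Longrightarrow> length J = card (Des J) + 1"
        using card_Des nonemp by (auto simp: comps_def)
      have "\<And>J. J \<in> ?A \<Longrightarrow> Rx J K = ?g (Des J)"
      proof -
        fix J assume J: "J \<in> ?A"
        have "(-1::rat) ^ (length J + length K) = (-1) ^ (card (Des J) + card (Des K) + 2)"
          using lenc[of J] lenc[of K] J K by simp
        then show "Rx J K = ?g (Des J)" using J K by (auto simp: Rx_def comps_def)
      qed
      then have "(\<Sum>J\<in>?A. Rx J K) = (\<Sum>J\<in>?A. ?g (Des J))" by (rule sum.cong[OF refl])
      also have "\<dots> = (\<Sum>D\<in>Des ` ?A. ?g D)"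
      proof -
        have "inj_on Des ?A" by (rule inj_onI) (auto intro: Des_inj)
        then show ?thesis by (simp add: sum.reindex)
      qed
      also have "Des ` ?A = Pow (Des I)"
      proof
        show "Des ` ?A \<subseteq> Pow (Des I)" by auto
        show "Pow (Des I) \<subseteq> Des ` ?A"
        proof
          fix D assume "D \<in> Pow (Des I)"
          then have "D \<subseteq> {0<..<n}" using Des_bound[of I] I by (auto simp: comps_def)
          then obtain J where "J \<in> comps n" "Des J = D" using Des_surj n0 by blast
          then show "D \<in> Des ` ?A" using \<open>D \<in> Pow (Des I)\<close> by auto
        qed
      qed
      also have "(\<Sum>D\<in>Pow (Des I). ?g D) = (\<Sum>D\<in>{D. D \<subseteq> Des I \<and> Des K \<subseteq> D}. (-1) ^ card D * (-1) ^ card (Des K))"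
        by (subst sum.inter_filter[symmetric]) (auto simp: finite_Des power_add Pow_def intro!: sum.cong)
      also have "\<dots> = (if Des K = Des I then 1 else 0)"
      proof -
        have "(\<Sum>D\<in>{D. D \<subseteq> Des I \<and> Des K \<subseteq> D}. (-1::rat) ^ card D * (-1) ^ card (Des K))
           = (\<Sum>D\<in>{D. D \<subseteq> Des I \<and> Des K \<subseteq> D}. (-1::rat) ^ card D) * (-1) ^ card (Des K)"
          by (simp add: sum_distrib_right)
        also have "\<dots> = (if Des K = Des I then (-1) ^ card (Des I) else 0) * (-1) ^ card (Des K)"
          by (simp only: alt_sum finite_Des)
        also have "\<dots> = (if Des K = Des I then 1 else 0)"
          by (auto simp flip: power_add)
        finally show ?thesis .
      qed
      also have "\<dots> = (if K = I then 1 else 0)" using Des_inj[OF K I] by auto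
      finally show ?thesis using lhs rhs by simp
    qed
  qed
qed

lemma Rx_zero: "0 \<in> set J \<Longrightarrow> Rx J = 0"
  by (simp add: Rx_def fun_eq_iff)

lemma shorter:
  assumes "J \<in> comps n" "J' \<in> comps n" "Des J' \<subseteq> Des J" "J' \<noteq> J"
  shows "length J' < length J"
proof -
  have "Des J' \<noteq> Des J" using Des_inj assms by metis
  then have c: "card (Des J') < card (Des J)" using assms(3) finite_Des by (simp add: psubset_card_mono)
  have "J \<noteq> []"
  proof
    assume "J = []"
    then have "n = 0" using assms by (simp add: comps_def)
    then show False using assms \<open>J = []\<close> by (simp add: comps_0)
  qed
  show ?thesis
  proof (cases "J' = []")
    case True then show ?thesis using \<open>J \<noteq> []\<close> by simp
  next
    case False
    then show ?thesis using card_Des[of J] card_Des[of J'] assms c \<open>J \<noteq> []\<close> by (auto simp: comps_def)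
  qed
qed

definition ribP :: "(nat list \<Rightarrow> ncsf) \<Rightarrow> bool" where
  "ribP Q \<longleftrightarrow> (\<forall>n. \<forall>I\<in>comps n. SI I = (\<Sum>J\<in>{J\<in>comps n. Des J \<subseteq> Des I}. Q J))
                  \<and> (\<forall>J. 0 \<in> set J \<longrightarrow> Q J = 0)"

lemma ribP_Rx: "ribP Rx"
  unfolding ribP_def using Rx_prop Rx_zero by blast

lemma ribP_uniq: "ribP R1 \<Longrightarrow> ribP R2 \<Longrightarrow> R1 J = R2 J"
proof (induction "length J" arbitrary: J rule: less_induct)
  case less
  show ?case
  proof (cases "0 \<in> set J")
    case True then show ?thesis using less.prems by (simp add: ribP_def)
  next
    case False
    define n where "n = sum_list J"
    have J: "J \<in> comps n" using False by (simp add: comps_def n_def)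
    let ?A = "{J'\<in>comps n. Des J' \<subseteq> Des J}"
    have fA: "finite ?A" using finite_comps by simp
    have JA: "J \<in> ?A" using J by simp
    have eq: "\<And>Q. ribP Q \<Longrightarrow> SI J = Q J + (\<Sum>J'\<in>?A - {J}. Q J')"
      using J by (simp add: ribP_def sum.remove[OF fA JA])
    have "(\<Sum>J'\<in>?A - {J}. R1 J') = (\<Sum>J'\<in>?A - {J}. R2 J')"
    proof (rule sum.cong[OF refl])
      fix J' assume "J' \<in> ?A - {J}"
      then have "length J' < length J" using shorter J by blast
      then show "R1 J' = R2 J'" using less by blast
    qed
    then show ?thesis using eq[OF less.prems(1)] eq[OF less.prems(2)] by simp
  qed
qed

lemma ribbons_eq: "ribbons = Rx"
proof -
  have "ribbons = (THE Q. ribP Q)" by (simp add: ribbons_def ribP_def)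
  also have "\<dots> = Rx"
    by (rule the_equality) (use ribP_Rx ribP_uniq in auto)
  finally show ?thesis .
qed

lemma Des_rep1: "Des (replicate k 1) = {0<..<k}"
proof (induction k)
  case 0 then show ?case by simp
next
  case (Suc k)
  show ?case
  proof (cases "k = 0")
    case True then show ?thesis by auto
  next
    case False
    have "Des (replicate (Suc k) 1) = insert 1 ((+) 1 ` {0<..<k})"
      using False Suc by (simp add: Des_Cons)
    also have "\<dots> = {0<..<Suc k}"
    proof
      show "insert 1 ((+) 1 ` {0<..<k}) \<subseteq> {0<..<Suc k}" using False by auto
      show "{0<..<Suc k} \<subseteq> insert 1 ((+) 1 ` {0<..<k})"
      proof
        fix d assume d: "d \<in> {0<..<Suc k}"
        show "d \<in> insert 1 ((+) 1 ` {0<..<k})"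
        proof (cases "d = 1")
          case True then show ?thesis by simp
        next
          case False
          then have "d - 1 \<in> {0<..<k}" "d = 1 + (d - 1)" using d by auto
          then show ?thesis by blast
        qed
      qed
    qed
    finally show ?thesis .
  qed
qed

lemma Lam_val: "Lam k K = (if K \<in> comps k then (-1) ^ (k + length K) else 0)"
proof (cases "k = 0")
  case True then show ?thesis by (auto simp: Lam_def nc_one_def comps_0)
next
  case False
  have "0 \<notin> set (replicate k (1::nat))" by simp
  moreover have "K \<in> comps k \<Longrightarrow> Des K \<subseteq> Des (replicate k 1)"
    unfolding Des_rep1 using Des_bound[of K] by (simp add: comps_def)
  ultimately show ?thesis using False by (auto simp: Lam_def ribbons_eq Rx_def sum_list_replicate)
qed

lemma Des_T: "Des (replicate k 2 @ [1]) = {d. 0 < d \<and> d < 2 * k + 1 \<and> even d}"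
proof (induction k)
  case 0 then show ?case by auto
next
  case (Suc k)
  have "Des (replicate (Suc k) 2 @ [1]) = insert 2 ((+) 2 ` {d. 0 < d \<and> d < 2 * k + 1 \<and> even d})"
    using Suc by (simp add: Des_Cons)
  also have "\<dots> = {d. 0 < d \<and> d < 2 * Suc k + 1 \<and> even d}"
  proof
    show "insert 2 ((+) 2 ` {d. 0 < d \<and> d < 2 * k + 1 \<and> even d}) \<subseteq> {d. 0 < d \<and> d < 2 * Suc k + 1 \<and> even d}"
      by auto
    show "{d. 0 < d \<and> d < 2 * Suc k + 1 \<and> even d} \<subseteq> insert 2 ((+) 2 ` {d. 0 < d \<and> d < 2 * k + 1 \<and> even d})"
    proof
      fix d assume d: "d \<in> {d. 0 < d \<and> d < 2 * Suc k + 1 \<and> even d}"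
      show "d \<in> insert 2 ((+) 2 ` {d. 0 < d \<and> d < 2 * k + 1 \<and> even d})"
      proof (cases "d = 2")
        case True then show ?thesis by simp
      next
        case False
        then have "d - 2 \<in> {d. 0 < d \<and> d < 2 * k + 1 \<and> even d}" "d = 2 + (d - 2)" using d by auto
        then show ?thesis by blast
      qed
    qed
  qed
  finally show ?case .
qed

lemma Des_even_iff: "Des K \<subseteq> {d. even d} \<longleftrightarrow> (\<forall>x\<in>set (butlast K). even x)"
proof (induction K)
  case Nil then show ?case by simp
next
  case (Cons x K)
  then show ?case by (cases "K = []") (auto simp: Des_Cons)
qed

lemma om_snoc: "om (B @ [y]) = om B + (if odd y then 1 else 0)"
  by (simp add: om_def)

lemma om0_iff: "om B = 0 \<longleftrightarrow> (\<forall>x\<in>set B. even x)"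
  by (simp add: om_def filter_empty_conv)

lemma ep_snoc: "ep (B @ [y]) = (if 0 \<in> set B \<or> y = 0 then 0 else if odd y then (-1) ^ (length B + 1 + sum_list B + y) else 0)"
  by (auto simp: ep_def add.assoc)

lemma even_sum: "\<forall>x\<in>set B. even x \<Longrightarrow> even (sum_list (B::nat list))"
  by (induction B) auto

lemma T_val:
  assumes i: "odd i"
  shows "T i K = (if sum_list K = i \<and> om K = 1 then (-1) ^ ((i - 1) div 2) * ep K else 0)"
proof -
  define k where "k = (i - 1) div 2"
  have ik: "i = 2 * k + 1" using i k_def by presburger
  have T: "T i = Rx (replicate k 2 @ [1])" by (simp add: T_def ribbons_eq k_def)
  have sJ: "sum_list (replicate k 2 @ [1]) = i" using ik by (simp add: sum_list_replicate)
  show ?thesis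
  proof (cases "K \<in> comps i")
    case False
    then have "sum_list K \<noteq> i \<or> 0 \<in> set K" by (auto simp: comps_def)
    then show ?thesis using False T sJ by (auto simp: Rx_def ep_def)
  next
    case True
    then have K0: "0 \<notin> set K" "sum_list K = i" by (auto simp: comps_def)
    then have "K \<noteq> []" using i by auto
    then obtain B y where K: "K = B @ [y]" by (cases K rule: rev_cases) auto
    have B0: "0 \<notin> set B" "y \<noteq> 0" using K0 K by auto
    have "Des K \<subseteq> Des (replicate k 2 @ [1]) \<longleftrightarrow> Des K \<subseteq> {d. even d}"
      unfolding Des_T using Des_bound[of K] K0 ik by auto
    also have "\<dots> \<longleftrightarrow> (\<forall>x\<in>set B. even x)" using K by (simp add: Des_even_iff)
    finally have DD: "Des K \<subseteq> Des (replicate k 2 @ [1]) \<longleftrightarrow> (\<forall>x\<in>set B. even x)" .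
    have lhs: "T i K = (if (\<forall>x\<in>set B. even x) then (-1) ^ (k + 1 + length K) else 0)"
      using T True DD sJ by (simp add: Rx_def)
    show ?thesis
    proof (cases "\<forall>x\<in>set B. even x")
      case True
      have eB: "even (sum_list B)" using True even_sum by blast
      have oy: "odd y" using K0 K eB i by auto
      have "om K = 1" using K True oy by (simp add: om_snoc om0_iff[symmetric])
      moreover have "ep K = (-1) ^ (length B + 1 + i)"
      proof -
        have "length B + 1 + sum_list B + y = length B + 1 + i" using K K0 by simp
        then show ?thesis using K B0 oy by (simp only: ep_snoc if_False if_True) simp
      qed
      moreover have "(-1::rat) ^ (k + 1 + length K) = (-1) ^ k * (-1) ^ (length B + 1 + i)"
        using K ik by (simp add: power_add)
      ultimately show ?thesis using lhs True K0 k_def by simp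
    next
      case False
      have "\<not> (om K = 1 \<and> ep K \<noteq> 0)"
      proof
        assume a: "om K = 1 \<and> ep K \<noteq> 0"
        then have "odd y" using K B0 by (auto simp: ep_snoc split: if_splits)
        then have "om B = 0" using a K by (simp add: om_snoc)
        then show False using False om0_iff by blast
      qed
      then show ?thesis using lhs False by auto
    qed
  qed
qed

definition d1 :: "nat \<Rightarrow> rat" where "d1 m = (if m = 1 then 1 else 0)"

lemma tt_eq: "tt = Phi d1"
proof
  fix K
  have "tt K = Sum_any (\<lambda>k. (-1) ^ k * T (2 * k + 1) K)"
    by (simp add: tt_def nc_sum_set_def nc_smult_def)
  also have "(\<lambda>k. (-1) ^ k * T (2 * k + 1) K) =
      (\<lambda>k. if k = sum_list K div 2 then (if odd (sum_list K) \<and> om K = 1 then ep K else 0) else 0)"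
  proof
    fix k
    have "T (2 * k + 1) K = (if sum_list K = 2 * k + 1 \<and> om K = 1 then (-1) ^ k * ep K else 0)"
      by (simp add: T_val)
    moreover have "sum_list K = 2 * k + 1 \<longleftrightarrow> k = sum_list K div 2 \<and> odd (sum_list K)" by presburger
    moreover have "(-1::rat) ^ k * ((-1) ^ k * e) = e" for e
      by (simp flip: mult.assoc power_add)
    ultimately show "(-1) ^ k * T (2 * k + 1) K =
      (if k = sum_list K div 2 then (if odd (sum_list K) \<and> om K = 1 then ep K else 0) else 0)"
      by auto
  qed
  also have "Sum_any \<dots> = (if odd (sum_list K) \<and> om K = 1 then ep K else 0)"
    by simp
  also have "\<dots> = Phi d1 K"
    using parity_om[of K] by (auto simp: Phi_def d1_def)
  finally show "tt K = Phi d1 K" .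
qed

lemma mult_S_right: "j > 0 \<Longrightarrow> nc_mult f (S j) K = (if K \<noteq> [] \<and> last K = j then f (butlast K) else 0)"
proof (induction K arbitrary: f)
  case Nil then show ?case by (simp add: mult_Nil S_def)
next
  case (Cons x K)
  then show ?case by (cases "K = []") (auto simp: mult_Cons S_def)
qed

definition sg :: "nat \<Rightarrow> rat" where "sg m = (if m = 0 then 1 else 2)"

lemma St_val: "St n K = (if n = sum_list K then Phi sg K else 0)"
proof -
  have "St n K = (\<Sum>k<Suc n. nc_mult (Lam k) (S (n - k)) K)"
    by (simp add: St_def sum_fun_at lessThan_Suc_atMost)
  also have "\<dots> = Lam n K + (\<Sum>k<n. if K \<noteq> [] \<and> last K = n - k then Lam k (butlast K) else 0)"
  proof -
    have "\<And>k. k < n \<Longrightarrow> nc_mult (Lam k) (S (n - k)) K = (if K \<noteq> [] \<and> last K = n - k then Lam k (butlast K) else 0)"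
      by (rule mult_S_right) simp
    then show ?thesis by (simp add: S_def mult_one_right)
  qed
  finally have St: "St n K = Lam n K + (\<Sum>k<n. if K \<noteq> [] \<and> last K = n - k then Lam k (butlast K) else 0)" .
  show ?thesis
  proof (cases K rule: rev_cases)
    case Nil
    then show ?thesis using St by (simp add: Lam_val comps_def Phi_def sg_def)
  next
    case (snoc B y)
    have "(\<Sum>k<n. if K \<noteq> [] \<and> last K = n - k then Lam k (butlast K) else 0)
        = (\<Sum>k<n. if k = sum_list B then (if 0 \<notin> set B \<and> y = n - sum_list B then (-1) ^ (sum_list B + length B) else 0) else 0)"
      using snoc by (intro sum.cong refl) (auto simp: Lam_val comps_def)
    also have "\<dots> = (if sum_list B < n \<and> 0 \<notin> set B \<and> y = n - sum_list B then (-1) ^ (sum_list B + length B) else 0)"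
      by simp
    finally have s2: "(\<Sum>k<n. if K \<noteq> [] \<and> last K = n - k then Lam k (butlast K) else 0) = \<dots>" .
    show ?thesis
    proof (cases "0 \<in> set K")
      case True
      then have "ep K = 0" by (simp add: ep_def)
      moreover have "Lam n K = 0" using True by (simp add: Lam_val comps_def)
      moreover have "\<not> (sum_list B < n \<and> 0 \<notin> set B \<and> y = n - sum_list B)" using True snoc by auto
      ultimately have "St n K = 0" "Phi sg K = 0" using St s2 by (simp_all add: Phi_def)
      then show ?thesis by simp
    next
      case False
      then have y0: "y > 0" "0 \<notin> set B" using snoc by auto
      have c: "(sum_list B < n \<and> 0 \<notin> set B \<and> y = n - sum_list B) \<longleftrightarrow> n = sum_list K"
        using y0 snoc by auto
      have lam: "Lam n K = (if n = sum_list K then (-1) ^ (sum_list B + y + length B + 1) else 0)"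
        using False snoc by (simp add: Lam_val comps_def)
      have ph: "Phi sg K = 2 * ep K"
        using ep_om[of K] snoc by (cases "ep K = 0") (auto simp: Phi_def sg_def)
      have "(-1::rat) ^ (sum_list B + y + length B + 1) + (-1) ^ (sum_list B + length B) = 2 * ep K"
      proof (cases "odd y")
        case True
        have e1: "(-1::rat) ^ (y + 1) = 1" using True by simp
        have x1: "sum_list B + y + length B + 1 = (sum_list B + length B) + (y + 1)" by simp
        have x2: "length B + 1 + sum_list B + y = (sum_list B + length B) + (y + 1)" by simp
        have A: "(-1::rat) ^ (sum_list B + y + length B + 1) = (-1) ^ (sum_list B + length B)"
          unfolding x1 by (subst power_add) (simp only: e1 mult_1_right)
        have "ep K = (-1) ^ (length B + 1 + sum_list B + y)"
          using True y0 snoc by (simp only: ep_snoc if_False if_True) simp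
        moreover have "(-1::rat) ^ (length B + 1 + sum_list B + y) = (-1) ^ (sum_list B + length B)"
          unfolding x2 by (subst power_add) (simp only: e1 mult_1_right)
        ultimately have "ep K = (-1) ^ (sum_list B + length B)" by simp
        then show ?thesis using A by simp
      next
        case False
        have "(-1::rat) ^ (sum_list B + y + length B + 1) = (-1) ^ (sum_list B + length B) * (-1) ^ (y + 1)"
          by (simp add: power_add[symmetric] algebra_simps)
        moreover have "(-1::rat) ^ (y + 1) = -1" using False by simp
        moreover have "ep K = 0"
          using False y0 snoc by (simp add: ep_snoc)
        ultimately show ?thesis by simp
      qed
      then show ?thesis using St s2 c lam ph by auto
    qed
  qed
qed

lemma sigma_eq: "sigma1t = Phi sg"
proof
  fix K
  have "sigma1t K = Sum_any (\<lambda>n. if n = sum_list K then Phi sg K else 0)"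
    by (simp add: sigma1t_def nc_sum_set_def St_val)
  also have "\<dots> = Phi sg K" by simp
  finally show "sigma1t K = Phi sg K" .
qed

primrec bs :: "nat list \<Rightarrow> nat list" where
  "bs [] = []"
| "bs (x # K) = (if odd x then x # bs K else (case bs K of [] \<Rightarrow> [x] | y # ys \<Rightarrow> (x + y) # ys))"

primrec tau :: "nat list \<Rightarrow> rat" where
  "tau [] = 1"
| "tau (x # K) = (if x = 0 then 0 else if odd x then (-1) ^ ((x - 1) div 2) * tau K
     else if K = [] then 0 else (-1) ^ (x div 2 + 1) * tau K)"

lemma bs_ne: "bs (x # K) \<noteq> []"
  by (auto split: list.splits)

lemma T_Nil: "odd i \<Longrightarrow> T i [] = 0"
  by (simp add: T_val)

lemma T_Cons_odd:
  assumes "odd i" "odd x"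
  shows "(\<lambda>L. T i (x # L)) = (\<lambda>L. if x = i then (-1) ^ ((i - 1) div 2) * nc_one L else 0)"
proof
  fix L
  show "T i (x # L) = (if x = i then (-1) ^ ((i - 1) div 2) * nc_one L else 0)"
  proof (cases "L = []")
    case True then show ?thesis using assms by (auto simp: T_val om_Cons nc_one_def ep_Cons)
  next
    case False
    have h: "om (x # L) = 1 \<Longrightarrow> ep (x # L) = 0" using assms False ep_om0[of L] by (simp add: om_Cons ep_Cons)
    have "T i (x # L) = 0" using T_val[OF assms(1), of "x # L"] h by auto
    then show ?thesis using False by (simp add: nc_one_def)
  qed
qed

lemma T_Cons_even:
  assumes "odd i" "even x" "x > 0"
  shows "(\<lambda>L. T i (x # L)) = (\<lambda>L. if x < i then (-1) ^ (x div 2 + 1) * T (i - x) L else 0)"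
proof
  fix L
  show "T i (x # L) = (if x < i then (-1) ^ (x div 2 + 1) * T (i - x) L else 0)"
  proof (cases "L = []")
    case True then show ?thesis using assms by (simp add: T_val om_Cons ep_Cons)
  next
    case False
    show ?thesis
    proof (cases "x < i")
      case True
      have oi: "odd (i - x)" using assms True by simp
      have dd: "(i - 1) div 2 = x div 2 + (i - x - 1) div 2"
      proof -
        obtain a where a: "i = 2 * a + 1" using assms(1) oddE by blast
        obtain b where b: "x = 2 * b" using assms(2) evenE by blast
        have "b \<le> a" using True a b by simp
        then have "i - x - 1 = 2 * (a - b)" using a b by simp
        then show ?thesis using a b \<open>b \<le> a\<close> by simp
      qed
      have "sum_list (x # L) = i \<longleftrightarrow> sum_list L = i - x" using True by auto
      moreover have "om (x # L) = om L" using assms by (simp add: om_Cons)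
      moreover have "ep (x # L) = - ep L" using assms False by (simp add: ep_Cons)
      moreover have "(-1::rat) ^ ((i - 1) div 2) * (- e) = (-1) ^ (x div 2 + 1) * ((-1) ^ ((i - x - 1) div 2) * e)" for e
        by (subst dd) (simp add: power_add)
      ultimately have "T i (x # L) = (if sum_list L = i - x \<and> om L = 1 then (-1) ^ (x div 2 + 1) * ((-1) ^ ((i - x - 1) div 2) * ep L) else 0)"
        using T_val[OF assms(1), of "x # L"] by simp
      also have "\<dots> = (-1) ^ (x div 2 + 1) * T (i - x) L"
        using T_val[OF oi, of L] by simp
      finally show ?thesis using True by simp
    next
      case False
      have "sum_list (x # L) \<noteq> i"
      proof
        assume a: "sum_list (x # L) = i"
        then have "x = i" using False by simp
        then show False using assms by simp
      qed
      then show ?thesis using assms False by (simp add: T_val)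
    qed
  qed
qed

lemma mult_smult_left: "nc_mult (\<lambda>L. c * F L) g K = c * nc_mult F g K"
  by (simp add: nc_mult_def sum_distrib_left mult.assoc)

lemma mult_if_left: "nc_mult (\<lambda>L. if P then F L else 0) g K = (if P then nc_mult F g K else 0)"
  by (cases P) (simp_all add: mult_zero_left)

lemma TI_Cons: "TI (i # I) = nc_mult (T i) (TI I)"
  by (simp add: TI_def)

lemma TI_val: "\<forall>i\<in>set I. odd i \<Longrightarrow> TI I K = (if I = bs K then tau K else 0)"
proof (induction K arbitrary: I)
  case Nil
  then show ?case
  proof (cases I)
    case Nil then show ?thesis by (simp add: TI_def nc_one_def)
  next
    case (Cons i I')
    then have "odd i" using \<open>\<forall>i\<in>set I. odd i\<close> by simp
    then show ?thesis using Cons by (simp add: TI_Cons mult_Nil T_Nil)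
  qed
next
  case (Cons x K)
  show ?case
  proof (cases I)
    case Nil
    have ne: "I \<noteq> bs (x # K)" using bs_ne[of x K] Nil by metis
    have "TI I (x # K) = 0" using Nil by (simp add: TI_def nc_one_def)
    then show ?thesis using ne by simp
  next
    case (Cons i I')
    have oi: "odd i" and oI: "\<forall>i\<in>set I'. odd i" using Cons.prems Cons by auto
    have base: "TI I (x # K) = nc_mult (\<lambda>L. T i (x # L)) (TI I') K"
      using Cons oi by (simp add: TI_Cons mult_Cons T_Nil)
    show ?thesis
    proof (cases "x = 0")
      case True
      have "(\<lambda>L. T i (x # L)) = (\<lambda>L. 0)" using True oi by (simp add: T_val ep_Cons fun_eq_iff)
      then show ?thesis using base True by (simp add: mult_zero_left)
    next
      case x0: False
      show ?thesis
      proof (cases "odd x")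
        case True
        have "TI I (x # K) = (if x = i then (-1) ^ ((i - 1) div 2) * TI I' K else 0)"
          using base T_Cons_odd[OF oi True] by (simp add: mult_if_left mult_smult_left mult_one_left)
        then show ?thesis using Cons.IH[OF oI] True x0 Cons by auto
      next
        case False
        have c: "(-1::rat) ^ (x div 2 + 1) = (-1) ^ (x div 2 + 1)" ..
        have step1: "TI I (x # K) = (if x < i then (-1) ^ (x div 2 + 1) * TI ((i - x) # I') K else 0)"
        proof -
          have eq: "(\<lambda>L. T i (x # L)) = (\<lambda>L. if x < i then (-1) ^ (x div 2 + 1) * T (i - x) L else 0)"
            using T_Cons_even[of i x] oi False x0 by simp
          have "TI I (x # K) = nc_mult (\<lambda>L. if x < i then (-1) ^ (x div 2 + 1) * T (i - x) L else 0) (TI I') K"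
            by (simp only: base eq)
          then show ?thesis by (simp only: mult_if_left mult_smult_left TI_Cons)
        qed
        have xi: "x \<noteq> i" using oi False by auto
        show ?thesis
        proof (cases "x < i")
          case xl: False
          have "I \<noteq> bs (x # K) \<or> tau (x # K) = 0"
          proof (cases "K = []")
            case True then show ?thesis using x0 False by simp
          next
            case Kne: False
            show ?thesis
            proof (cases "bs K")
              case Nil then show ?thesis using False \<open>I = i # I'\<close> xi by simp
            next
              case (Cons y ys)
              then have bsx: "bs (x # K) = (x + y) # ys" using False by simp
              have "i \<noteq> x + y" using xl xi by auto
              then have "I \<noteq> bs (x # K)" using bsx \<open>I = i # I'\<close> by simp
              then show ?thesis by blast
            qed
          qed
          then show ?thesis using step1 xl by auto
        next
          case xl: True
          have oix: "\<forall>j\<in>set ((i - x) # I'). odd j" using oI oi False xl by simp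
          have ih: "TI ((i - x) # I') K = (if (i - x) # I' = bs K then tau K else 0)"
            using Cons.IH[OF oix] .
          show ?thesis
          proof (cases "K = []")
            case True
            then show ?thesis using step1 ih xl x0 False by simp
          next
            case Kne: False
            have t: "tau (x # K) = (-1) ^ (x div 2 + 1) * tau K" using x0 False Kne by simp
            have "(i - x) # I' = bs K \<longleftrightarrow> I = bs (x # K)"
            proof (cases "bs K")
              case Nil then show ?thesis using False \<open>I = i # I'\<close> xi by simp
            next
              case (Cons y ys)
              then have "bs (x # K) = (x + y) # ys" using False by simp
              then show ?thesis using \<open>I = i # I'\<close> xl Cons by auto
            qed
            then show ?thesis using step1 ih xl t by simp
          qed
        qed
      qed
    qed
  qed
qed

definition rho :: "nat list \<Rightarrow> rat" where "rho I = (-1) ^ (sum_list (map (\<lambda>i. (i - 1) div 2) I))"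

lemma rho_eq: "\<forall>i\<in>set I. odd i \<Longrightarrow> (sum_list I - length I) div 2 = sum_list (map (\<lambda>i. (i - 1) div 2) I)"
proof (induction I)
  case Nil then show ?case by simp
next
  case (Cons i I)
  have "length I \<le> sum_list I" using length_le_sum[of I] Cons.prems by auto
  moreover have "odd i" using Cons.prems by simp
  moreover obtain m where m: "i = 2 * m + 1" using \<open>odd i\<close> oddE by blast
  ultimately have "sum_list (i # I) - length (i # I) = 2 * m + (sum_list I - length I)" by simp
  then have "(sum_list (i # I) - length (i # I)) div 2 = m + (sum_list I - length I) div 2" by simp
  then show ?case using Cons m by simp
qed

lemma tau_facts: "(tau K \<noteq> 0 \<longrightarrow> (\<forall>i\<in>set (bs K). odd i) \<and> length (bs K) = om K \<and> rho (bs K) * tau K = ep K)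
   \<and> (tau K = 0 \<longrightarrow> ep K = 0)"
proof (induction K)
  case Nil then show ?case by (simp add: rho_def)
next
  case (Cons x K)
  show ?case
  proof (cases "x = 0")
    case True then show ?thesis by (simp add: ep_Cons)
  next
    case x0: False
    show ?thesis
    proof (cases "odd x")
      case True
      have sq: "(-1::rat) ^ ((x - 1) div 2) * (-1) ^ ((x - 1) div 2) = 1"
        by (simp flip: power_add)
      have r: "rho (x # bs K) = (-1) ^ ((x - 1) div 2) * rho (bs K)" by (simp add: rho_def power_add)
      have t: "tau (x # K) = (-1) ^ ((x - 1) div 2) * tau K" using True x0 by simp
      have bx: "bs (x # K) = x # bs K" using True by simp
      have e: "ep (x # K) = ep K" using True x0 by (simp add: ep_Cons)
      have o: "om (x # K) = Suc (om K)" using True by (simp add: om_Cons)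
      show ?thesis
      proof (cases "tau K = 0")
        case True then show ?thesis using t e Cons.IH by simp
      next
        case False
        then have ih: "\<forall>i\<in>set (bs K). odd i" "length (bs K) = om K" "rho (bs K) * tau K = ep K"
          using Cons.IH by auto
        have "rho (bs (x # K)) * tau (x # K) = ((-1) ^ ((x - 1) div 2) * (-1) ^ ((x - 1) div 2)) * (rho (bs K) * tau K)"
          using r t bx by (simp add: algebra_simps)
        also have "\<dots> = ep (x # K)" using sq ih e by simp
        finally have "rho (bs (x # K)) * tau (x # K) = ep (x # K)" .
        moreover have "tau (x # K) \<noteq> 0" using t False by simp
        ultimately show ?thesis using ih bx o \<open>odd x\<close> by simp
      qed
    next
      case False
      show ?thesis
      proof (cases "K = []")
        case True then show ?thesis using x0 False by (simp add: ep_Cons)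
      next
        case Kne: False
        show ?thesis
        proof (cases "tau K = 0")
          case True then show ?thesis using Cons Kne False x0 by (simp add: ep_Cons)
        next
          case tK: False
          then have ih: "\<forall>i\<in>set (bs K). odd i" "length (bs K) = om K" "rho (bs K) * tau K = ep K"
            using Cons by auto
          have "rho (bs K) \<noteq> 0" by (simp add: rho_def)
          then have "ep K \<noteq> 0" using ih(3) tK by (metis mult_eq_0_iff)
          then have "om K > 0" using ep_om Kne by blast
          then obtain y ys where b: "bs K = y # ys" using ih(2) by (cases "bs K") auto
          have oy: "odd y" using ih b by simp
          have bx: "bs (x # K) = (x + y) # ys" using False b by simp
          have dd: "(x + y - 1) div 2 = x div 2 + (y - 1) div 2"
          proof -
            obtain b where b: "x = 2 * b" using False evenE by blast
            obtain c where c: "y = 2 * c + 1" using oy oddE by blast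
            have "x + y - 1 = 2 * (b + c)" using b c by simp
            then show ?thesis using b c by simp
          qed
          have r: "rho (bs (x # K)) = (-1) ^ (x div 2) * rho (bs K)"
            using bx b dd by (simp add: rho_def power_add)
          have t: "tau (x # K) = (-1) ^ (x div 2 + 1) * tau K" using x0 False Kne by simp
          have sq: "(-1::rat) ^ (x div 2) * (-1) ^ (x div 2 + 1) = -1"
            by (simp flip: power_add)
          have "rho (bs (x # K)) * tau (x # K) = ((-1) ^ (x div 2) * (-1) ^ (x div 2 + 1)) * (rho (bs K) * tau K)"
            unfolding r t by (simp only: mult_ac)
          also have "\<dots> = - ep K" using sq ih(3) by simp
          also have "\<dots> = ep (x # K)" using x0 False Kne by (simp add: ep_Cons)
          finally have "rho (bs (x # K)) * tau (x # K) = ep (x # K)" .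
          moreover have "\<forall>i\<in>set (bs (x # K)). odd i" using bx ih b False oy by auto
          moreover have "length (bs (x # K)) = om (x # K)" using bx b ih False by (simp add: om_Cons)
          moreover have "tau (x # K) \<noteq> 0" using t tK by simp
          ultimately show ?thesis by blast
        qed
      qed
    qed
  qed
qed

lemma cpow_low: "b 0 = 0 \<Longrightarrow> m < n \<Longrightarrow> cpow b n m = 0"
proof (induction n arbitrary: m)
  case 0 then show ?case by simp
next
  case (Suc n)
  have "\<And>i. i \<le> m \<Longrightarrow> b i * cpow b n (m - i) = 0"
  proof -
    fix i assume i: "i \<le> m"
    show "b i * cpow b n (m - i) = 0"
    proof (cases "i = 0")
      case True then show ?thesis using Suc.prems by simp
    next
      case False then have "m - i < n" using Suc.prems i by simp
      then show ?thesis using Suc.IH Suc.prems by simp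
    qed
  qed
  then have "(\<Sum>i\<le>m. b i * cpow b n (m - i)) = 0" by (intro sum.neutral) auto
  then show ?case by (simp add: cauchy_def)
qed

lemma cpow_sd1: "cpow (\<lambda>j. c * d1 j) n m = (if m = n then c ^ n else 0)"
proof (induction n arbitrary: m)
  case 0 then show ?case by (simp add: d0_def)
next
  case (Suc n)
  have "cpow (\<lambda>j. c * d1 j) (Suc n) m = (\<Sum>i\<le>m. c * d1 i * cpow (\<lambda>j. c * d1 j) n (m - i))"
    by (simp add: cauchy_def)
  also have "\<dots> = (\<Sum>i\<le>m. if i = 1 then c * (if m - 1 = n then c ^ n else 0) else 0)"
    by (rule sum.cong[OF refl], simp only: Suc.IH, auto simp: d1_def)
  also have "\<dots> = (if 1 \<in> {..m} then c * (if m - 1 = n then c ^ n else 0) else 0)"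
    by (rule sum.delta[OF finite_atMost])
  also have "\<dots> = (if m = Suc n then c ^ Suc n else 0)"
    by auto
  finally show ?case .
qed

definition u2 :: "nat \<Rightarrow> rat" where "u2 j = (if j = 0 then 0 else 2)"

lemma choose_sum_aux: "(\<Sum>i\<le>m. if i = 0 \<or> i = m then 0 else of_nat ((m - i - 1) choose n) :: rat)
   = (if m = 0 then 0 else of_nat ((m - 1) choose Suc n))"
proof (cases m)
  case 0 then show ?thesis by simp
next
  case (Suc p)
  have "(\<Sum>i\<le>m. if i = 0 \<or> i = m then 0 else of_nat ((m - i - 1) choose n) :: rat)
      = (\<Sum>i\<le>p. if Suc i = Suc p then 0 else of_nat ((p - Suc i) choose n))"
    unfolding Suc by (simp add: sum.atMost_Suc_shift del: sum.atMost_Suc) (rule sum.cong, auto)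
  also have "\<dots> = (\<Sum>i<p. of_nat ((p - Suc i) choose n))"
    by (simp add: lessThan_Suc_atMost[symmetric] sum.lessThan_Suc)
  also have "\<dots> = (\<Sum>i<p. of_nat (i choose n))"
    by (rule sum.nat_diff_reindex)
  also have "\<dots> = of_nat (p choose Suc n)"
  proof (cases p)
    case 0 then show ?thesis by simp
  next
    case (Suc q)
    have "(\<Sum>i<p. of_nat (i choose n) :: rat) = of_nat (\<Sum>i\<le>q. i choose n)"
      using Suc by (simp add: lessThan_Suc_atMost)
    also have "\<dots> = of_nat (p choose Suc n)" using Suc by (simp only: sum_choose_upper)
    finally show ?thesis .
  qed
  finally show ?thesis using Suc by simp
qed

lemma cpow_u2: "cpow u2 (Suc n) m = 2 ^ Suc n * (if m = 0 then 0 else of_nat ((m - 1) choose n))"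
proof (induction n arbitrary: m)
  case 0
  have "cpow u2 (Suc 0) m = (\<Sum>i\<le>m. u2 i * d0 (m - i))" by (simp add: cauchy_def)
  also have "\<dots> = (\<Sum>i\<le>m. if i = m then u2 m else 0)" by (rule sum.cong) (auto simp: d0_def)
  also have "\<dots> = u2 m" by simp
  finally have "cpow u2 (Suc 0) m = u2 m" .
  then show ?case by (simp only:) (simp add: u2_def)
next
  case (Suc n)
  have "cpow u2 (Suc (Suc n)) m = (\<Sum>i\<le>m. u2 i * cpow u2 (Suc n) (m - i))"
    by (simp add: cauchy_def)
  also have "\<dots> = (\<Sum>i\<le>m. 2 ^ Suc (Suc n) * (if i = 0 \<or> i = m then 0 else of_nat ((m - i - 1) choose n)))"
    by (rule sum.cong[OF refl], simp only: Suc.IH, auto simp: u2_def)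
  also have "\<dots> = 2 ^ Suc (Suc n) * (\<Sum>i\<le>m. if i = 0 \<or> i = m then 0 else of_nat ((m - i - 1) choose n))"
    by (simp add: sum_distrib_left)
  also have "\<dots> = 2 ^ Suc (Suc n) * (if m = 0 then 0 else of_nat ((m - 1) choose Suc n))"
    by (simp only: choose_sum_aux)
  finally show ?case .
qed

definition cl :: "nat \<Rightarrow> rat" where "cl n = (-1) ^ (n + 1) / of_nat n"

lemma nc_log_Phi:
  assumes "A 0 = 1"
  shows "nc_log (Phi A) = Phi (\<lambda>m. \<Sum>n\<in>{1..m}. cl n * cpow (\<lambda>j. A j - d0 j) n m)"
proof -
  let ?b = "\<lambda>j. A j - d0 j"
  have b0: "?b 0 = 0" using assms by (simp add: d0_def)
  have e: "Phi A - nc_one = Phi ?b" by (simp add: Phi_d0[symmetric] Phi_diff)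
  have "(\<lambda>n::nat. if n = 0 then 0 else nc_smult ((-1) ^ (n + 1) / of_nat n) (nc_pow (Phi A - nc_one) n))
      = (\<lambda>n. Phi (\<lambda>m. if n = 0 then 0 else cl n * cpow ?b n m))"
    by (auto simp: e Phi_pow Phi_smult Phi_zero[symmetric] cl_def fun_eq_iff)
  then have "nc_log (Phi A) = Phi (\<lambda>m. Sum_any (\<lambda>n. if n = 0 then 0 else cl n * cpow ?b n m))"
    by (simp add: nc_log_def Phi_sum)
  also have "(\<lambda>m. Sum_any (\<lambda>n. if n = 0 then 0 else cl n * cpow ?b n m))
      = (\<lambda>m. \<Sum>n\<in>{1..m}. cl n * cpow ?b n m)"
  proof
    fix m
    have "{n. (if n = 0 then 0 else cl n * cpow ?b n m) \<noteq> 0} \<subseteq> {1..m}"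
    proof
      fix n assume "n \<in> {n. (if n = 0 then 0 else cl n * cpow ?b n m) \<noteq> 0}"
      then have "n \<noteq> 0" "cpow ?b n m \<noteq> 0" by (auto split: if_splits)
      moreover have "\<not> m < n" using cpow_low[of ?b m n, OF b0] \<open>cpow ?b n m \<noteq> 0\<close> by blast
      ultimately show "n \<in> {1..m}" by simp
    qed
    then have "Sum_any (\<lambda>n. if n = 0 then 0 else cl n * cpow ?b n m)
        = (\<Sum>n\<in>{1..m}. if n = 0 then 0 else cl n * cpow ?b n m)"
      by (rule Sum_any.expand_superset[OF finite_atLeastAtMost])
    also have "\<dots> = (\<Sum>n\<in>{1..m}. cl n * cpow ?b n m)" by (rule sum.cong) auto
    finally show "Sum_any (\<lambda>n. if n = 0 then 0 else cl n * cpow ?b n m) = (\<Sum>n\<in>{1..m}. cl n * cpow ?b n m)" .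
  qed
  finally show ?thesis .
qed

lemma comb:
  assumes m: "m \<ge> 1"
  shows "(\<Sum>n\<in>{1..m}. cl n * (2 ^ n * of_nat ((m - 1) choose (n - 1)))) = cl m - cl m * (-1) ^ m"
proof -
  have t: "cl n * (2 ^ n * of_nat ((m - 1) choose (n - 1))) = - (of_nat (m choose n) * (-2) ^ n) / of_nat m"
    if n: "n \<in> {1..m}" for n
  proof -
    have e: "n * (m choose n) = m * ((m - 1) choose (n - 1))"
      using n by (intro times_binomial_minus1_eq) auto
    then have e': "(of_nat n :: rat) * of_nat (m choose n) = of_nat m * of_nat ((m - 1) choose (n - 1))"
      by (metis of_nat_mult)
    have n0: "(of_nat n :: rat) \<noteq> 0" "(of_nat m :: rat) \<noteq> 0" using n by auto
    have p: "(-2::rat) ^ n = (-1) ^ n * 2 ^ n" by (simp flip: power_mult_distrib)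
    have "cl n * (2 ^ n * of_nat ((m - 1) choose (n - 1))) = (-1) ^ (n + 1) * 2 ^ n * (of_nat m * of_nat ((m - 1) choose (n - 1))) / (of_nat n * of_nat m)"
      using n0 by (simp add: cl_def field_simps)
    also have "\<dots> = (-1) ^ (n + 1) * 2 ^ n * (of_nat n * of_nat (m choose n)) / (of_nat n * of_nat m)"
      by (simp only: e')
    also have "\<dots> = - (of_nat (m choose n) * (-2) ^ n) / of_nat m"
      using n0 by (simp add: p field_simps)
    finally show ?thesis .
  qed
  have "(\<Sum>n\<in>{1..m}. cl n * (2 ^ n * of_nat ((m - 1) choose (n - 1))))
      = (\<Sum>n\<in>{1..m}. - (of_nat (m choose n) * (-2) ^ n) / of_nat m)"
    by (rule sum.cong) (use t in auto)
  also have "\<dots> = - (\<Sum>n\<in>{1..m}. of_nat (m choose n) * (-2) ^ n) / of_nat m"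
    by (simp add: sum_divide_distrib sum_negf)
  also have "(\<Sum>n\<in>{1..m}. of_nat (m choose n) * (-2::rat) ^ n) = (-1) ^ m - 1"
  proof -
    have b: "(\<Sum>n\<le>m. of_nat (m choose n) * (-2::rat) ^ n) = (-1) ^ m"
      using binomial_ring[of "-2::rat" 1 m] by simp
    have "(\<Sum>n\<le>m. of_nat (m choose n) * (-2::rat) ^ n) = 1 + (\<Sum>n\<in>{1..m}. of_nat (m choose n) * (-2) ^ n)"
      by (simp add: atMost_atLeast0 sum.atLeast_Suc_atMost)
    then show ?thesis using b by simp
  qed
  also have "- ((-1) ^ m - 1) / of_nat m = cl m - cl m * (-1) ^ m"
  proof (cases "even m")
    case True then show ?thesis by (simp add: cl_def)
  next
    case False then show ?thesis by (simp add: cl_def)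
  qed
  finally show ?thesis .
qed

lemma d1_scaled: "(\<lambda>j. c * d1 j) = (\<lambda>j. c * d1 j)" ..

lemma Lplus: "nc_log (nc_one + tt) = Phi (\<lambda>m. if m = 0 then 0 else cl m)"
proof -
  have A: "nc_one + tt = Phi (\<lambda>m. d0 m + d1 m)" by (simp add: Phi_d0[symmetric] tt_eq Phi_add)
  have b: "(\<lambda>j. (d0 j + d1 j) - d0 j) = (\<lambda>j. 1 * d1 j)" by simp
  have "nc_log (nc_one + tt) = Phi (\<lambda>m. \<Sum>n\<in>{1..m}. cl n * cpow (\<lambda>j. 1 * d1 j) n m)"
    unfolding A by (subst nc_log_Phi) (simp_all add: d0_def d1_def b[symmetric])
  also have "\<dots> = Phi (\<lambda>m. if m = 0 then 0 else cl m)"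
  proof -
    have "(\<Sum>n\<in>{1..m}. cl n * cpow (\<lambda>j. 1 * d1 j) n m) = (if m = 0 then 0 else cl m)" for m
    proof -
      have "(\<Sum>n\<in>{1..m}. cl n * cpow (\<lambda>j. 1 * d1 j) n m) = (\<Sum>n\<in>{1..m}. if n = m then cl m else 0)"
        by (rule sum.cong[OF refl], simp only: cpow_sd1) auto
      then show ?thesis by simp
    qed
    then show ?thesis by simp
  qed
  finally show ?thesis .
qed

lemma Lminus: "nc_log (nc_one - tt) = Phi (\<lambda>m. if m = 0 then 0 else cl m * (-1) ^ m)"
proof -
  have A: "nc_one - tt = Phi (\<lambda>m. d0 m - d1 m)" by (simp add: Phi_d0[symmetric] tt_eq Phi_diff)
  have b: "(\<lambda>j. (d0 j - d1 j) - d0 j) = (\<lambda>j. (-1) * d1 j)" by simp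
  have "nc_log (nc_one - tt) = Phi (\<lambda>m. \<Sum>n\<in>{1..m}. cl n * cpow (\<lambda>j. (-1) * d1 j) n m)"
    unfolding A by (subst nc_log_Phi) (simp_all add: d0_def d1_def b[symmetric])
  also have "\<dots> = Phi (\<lambda>m. if m = 0 then 0 else cl m * (-1) ^ m)"
  proof -
    have "(\<Sum>n\<in>{1..m}. cl n * cpow (\<lambda>j. (-1) * d1 j) n m) = (if m = 0 then 0 else cl m * (-1) ^ m)" for m
    proof -
      have "(\<Sum>n\<in>{1..m}. cl n * cpow (\<lambda>j. (-1) * d1 j) n m) = (\<Sum>n\<in>{1..m}. if n = m then cl m * (-1) ^ m else 0)"
        by (rule sum.cong[OF refl], simp only: cpow_sd1) auto
      then show ?thesis by simp
    qed
    then show ?thesis by simp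
  qed
  finally show ?thesis .
qed

lemma Lsig: "nc_log sigma1t = Phi (\<lambda>m. \<Sum>n\<in>{1..m}. cl n * (2 ^ n * of_nat ((m - 1) choose (n - 1))))"
proof -
  have b: "(\<lambda>j. sg j - d0 j) = u2" by (auto simp: sg_def d0_def u2_def)
  have "nc_log sigma1t = Phi (\<lambda>m. \<Sum>n\<in>{1..m}. cl n * cpow u2 n m)"
  proof -
    have s0: "sg 0 = 1" by (simp add: sg_def)
    show ?thesis unfolding sigma_eq nc_log_Phi[of sg, OF s0] b ..
  qed
  also have "\<dots> = Phi (\<lambda>m. \<Sum>n\<in>{1..m}. cl n * (2 ^ n * of_nat ((m - 1) choose (n - 1))))"
  proof -
    have "cpow u2 n m = 2 ^ n * of_nat ((m - 1) choose (n - 1))" if nm: "n \<in> {1..m}" for n m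
    proof -
      obtain k where k: "n = Suc k" using nm by (cases n) auto
      show ?thesis using nm k by (simp only: cpow_u2) auto
    qed
    then have "(\<Sum>n\<in>{1..m}. cl n * cpow u2 n m) = (\<Sum>n\<in>{1..m}. cl n * (2 ^ n * of_nat ((m - 1) choose (n - 1))))" for m
      by (intro sum.cong refl) simp
    then show ?thesis by simp
  qed
  finally show ?thesis .
qed

definition oinv :: "nat \<Rightarrow> rat" where "oinv m = (if odd m then 1 / of_nat m else 0)"

lemma conj5_aux:
  "nc_sum_set {I. (\<forall>i\<in>set I. odd i) \<and> odd (length I)}
      (\<lambda>I. nc_smult ((-1) ^ ((sum_list I - length I) div 2) / of_nat (length I)) (TI I)) = Phi oinv"
proof
  fix K
  let ?A = "{I. (\<forall>i\<in>set I. odd i) \<and> odd (length I)}"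
  let ?w = "\<lambda>I. (-1::rat) ^ ((sum_list I - length I) div 2) / of_nat (length I)"
  have "nc_sum_set ?A (\<lambda>I. nc_smult (?w I) (TI I)) K = Sum_any (\<lambda>I. if I \<in> ?A then ?w I * TI I K else 0)"
    by (simp only: nc_sum_set_def nc_smult_def)
  also have "(\<lambda>I. if I \<in> ?A then ?w I * TI I K else 0) = (\<lambda>I. if I = bs K then (if bs K \<in> ?A then ?w (bs K) * tau K else 0) else 0)"
  proof
    fix I
    show "(if I \<in> ?A then ?w I * TI I K else 0) = (if I = bs K then (if bs K \<in> ?A then ?w (bs K) * tau K else 0) else 0)"
    proof (cases "I \<in> ?A")
      case True
      then have "TI I K = (if I = bs K then tau K else 0)" by (intro TI_val) simp
      then show ?thesis using True by auto
    next
      case False then show ?thesis by auto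
    qed
  qed
  also have "Sum_any \<dots> = (if bs K \<in> ?A then ?w (bs K) * tau K else 0)" by simp
  also have "\<dots> = Phi oinv K"
  proof (cases "tau K = 0")
    case True
    then have "ep K = 0" using tau_facts by blast
    then show ?thesis using True by (simp add: Phi_def)
  next
    case False
    then have f: "\<forall>i\<in>set (bs K). odd i" "length (bs K) = om K" "rho (bs K) * tau K = ep K"
      using tau_facts by blast+
    have r: "(-1::rat) ^ ((sum_list (bs K) - length (bs K)) div 2) = rho (bs K)"
      using rho_eq[OF f(1)] by (simp add: rho_def)
    have mem: "bs K \<in> ?A \<longleftrightarrow> odd (om K)" using f by simp
    have "?w (bs K) * tau K = rho (bs K) * tau K / of_nat (om K)"
      by (subst r[symmetric]) (simp only: times_divide_eq_left f(2))
    then show ?thesis using mem f(3) by (simp add: Phi_def oinv_def)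
  qed
  finally show "nc_sum_set ?A (\<lambda>I. nc_smult (?w I) (TI I)) K = Phi oinv K" .
qed

lemma pow_tt: "nc_pow tt n = Phi (\<lambda>m. if m = n then 1 else 0)"
proof -
  have "d1 = (\<lambda>j. 1 * d1 j)" by simp
  then have "cpow d1 n = (\<lambda>m. if m = n then 1 else 0)"
    using cpow_sd1[of 1 n] by (metis power_one)
  then show ?thesis by (simp add: tt_eq Phi_pow)
qed

lemma conj4_aux: "nc_sum (\<lambda>k::nat. nc_smult (1 / of_nat (2 * k + 1)) (nc_pow tt (2 * k + 1))) = Phi oinv"
proof -
  have "nc_sum (\<lambda>k::nat. nc_smult (1 / of_nat (2 * k + 1)) (nc_pow tt (2 * k + 1)))
      = nc_sum (\<lambda>k::nat. Phi (\<lambda>m. 1 / of_nat (2 * k + 1) * (if m = 2 * k + 1 then 1 else 0)))"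
    by (simp only: pow_tt Phi_smult)
  also have "\<dots> = Phi (\<lambda>m. Sum_any (\<lambda>k. 1 / of_nat (2 * k + 1) * (if m = 2 * k + 1 then 1 else 0)))"
    by (rule Phi_sum)
  also have "(\<lambda>m. Sum_any (\<lambda>k::nat. 1 / of_nat (2 * k + 1) * (if m = 2 * k + 1 then 1 else (0::rat)))) = oinv"
  proof
    fix m
    have "(\<lambda>k::nat. 1 / of_nat (2 * k + 1) * (if m = 2 * k + 1 then 1 else (0::rat)))
        = (\<lambda>k. if k = m div 2 then oinv m else 0)"
    proof
      fix k :: nat
      show "1 / of_nat (2 * k + 1) * (if m = 2 * k + 1 then 1 else (0::rat)) = (if k = m div 2 then oinv m else 0)"
      proof (cases "m = 2 * k + 1")
        case True then show ?thesis by (simp add: oinv_def)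
      next
        case False then have "\<not> (k = m div 2 \<and> odd m)" by presburger
        then show ?thesis using False by (auto simp: oinv_def)
      qed
    qed
    then show "Sum_any (\<lambda>k::nat. 1 / of_nat (2 * k + 1) * (if m = 2 * k + 1 then 1 else (0::rat))) = oinv m"
      by (simp only: Sum_any.delta)
  qed
  finally show ?thesis .
qed

lemma inv_facts:
  "nc_mult (nc_one - tt) (Phi (\<lambda>_. 1)) = nc_one" "nc_mult (Phi (\<lambda>_. 1)) (nc_one - tt) = nc_one"
proof -
  have A: "nc_one - tt = Phi (\<lambda>m. d0 m - d1 m)" by (simp add: Phi_d0[symmetric] tt_eq Phi_diff)
  have s0: "\<And>m. (\<Sum>i\<le>m. d0 i) = 1" by (simp add: d0_def)
  have s1: "\<And>m. (\<Sum>i\<le>m. d1 i) = (if m = 0 then 0 else 1)"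
    by (simp add: d1_def) 
  have c1: "cauchy (\<lambda>m. d0 m - d1 m) (\<lambda>_. 1) = d0"
  proof
    fix m show "cauchy (\<lambda>m. d0 m - d1 m) (\<lambda>_. 1) m = d0 m"
      by (simp add: cauchy_def sum_subtractf s0 s1 d0_def)
  qed
  have c2: "cauchy (\<lambda>_. 1) (\<lambda>m. d0 m - d1 m) = d0"
  proof
    fix m
    have "(\<Sum>i\<le>m. d0 (m - i)) = (\<Sum>i\<le>m. if i = m then 1 else 0)"
      by (rule sum.cong) (auto simp: d0_def)
    moreover have "(\<Sum>i\<le>m. d1 (m - i)) = (\<Sum>i\<le>m. if i = m - 1 then (if m = 0 then 0 else 1) else 0)"
      by (rule sum.cong) (auto simp: d1_def)
    ultimately show "cauchy (\<lambda>_. 1) (\<lambda>m. d0 m - d1 m) m = d0 m"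
      by (simp add: cauchy_def sum_subtractf d0_def)
  qed
  show "nc_mult (nc_one - tt) (Phi (\<lambda>_. 1)) = nc_one" by (simp add: A Phi_mult c1 Phi_d0)
  show "nc_mult (Phi (\<lambda>_. 1)) (nc_one - tt) = nc_one" by (simp add: A Phi_mult c2 Phi_d0)
qed

lemma inv_eq: "nc_inv (nc_one - tt) = Phi (\<lambda>_. 1)"
  unfolding nc_inv_def
proof (rule the_equality)
  show "nc_mult (nc_one - tt) (Phi (\<lambda>_. 1)) = nc_one \<and> nc_mult (Phi (\<lambda>_. 1)) (nc_one - tt) = nc_one"
    using inv_facts by blast
next
  fix h assume h: "nc_mult (nc_one - tt) h = nc_one \<and> nc_mult h (nc_one - tt) = nc_one"
  have "h = nc_mult h nc_one" by (simp add: mult_one_right)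
  also have "\<dots> = nc_mult h (nc_mult (nc_one - tt) (Phi (\<lambda>_. 1)))" using inv_facts by simp
  also have "\<dots> = nc_mult (nc_mult h (nc_one - tt)) (Phi (\<lambda>_. 1))" by (simp add: mult_assoc)
  also have "\<dots> = Phi (\<lambda>_. 1)" using h by (simp add: mult_one_left)
  finally show "h = Phi (\<lambda>_. 1)" .
qed

theorem mainTheorem5:
  shows "nc_invertible (nc_one - tt)
    \<and> sigma1t = nc_mult (nc_one + tt) (nc_inv (nc_one - tt))
    \<and> nc_log sigma1t = nc_log (nc_one + tt) - nc_log (nc_one - tt)
    \<and> nc_log (nc_one + tt) - nc_log (nc_one - tt)
        = nc_smult 2 (nc_sum (\<lambda>k::nat. nc_smult (1 / of_nat (2 * k + 1)) (nc_pow tt (2 * k + 1))))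
    \<and> nc_smult 2 (nc_sum (\<lambda>k::nat. nc_smult (1 / of_nat (2 * k + 1)) (nc_pow tt (2 * k + 1))))
        = nc_smult 2 (nc_sum_set {I. (\<forall>i\<in>set I. odd i) \<and> odd (length I)}
             (\<lambda>I. nc_smult ((-1) ^ ((sum_list I - length I) div 2) / of_nat (length I)) (TI I)))"
proof -
  have c1: "nc_invertible (nc_one - tt)"
    unfolding nc_invertible_def using inv_facts by blast
  have c2: "sigma1t = nc_mult (nc_one + tt) (nc_inv (nc_one - tt))"
  proof -
    have A: "nc_one + tt = Phi (\<lambda>m. d0 m + d1 m)" by (simp add: Phi_d0[symmetric] tt_eq Phi_add)
    have "cauchy (\<lambda>m. d0 m + d1 m) (\<lambda>_. 1) = sg"
    proof
      fix m
      have s0: "(\<Sum>i\<le>m. d0 i) = 1" by (simp add: d0_def)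
      have s1: "(\<Sum>i\<le>m. d1 i) = (if m = 0 then 0 else 1)" by (simp add: d1_def)
      show "cauchy (\<lambda>m. d0 m + d1 m) (\<lambda>_. 1) m = sg m"
        by (simp add: cauchy_def sum.distrib s0 s1 sg_def)
    qed
    then show ?thesis by (simp add: inv_eq A Phi_mult sigma_eq)
  qed
  let ?Lp = "\<lambda>m::nat. if m = 0 then 0 else cl m"
  let ?Lm = "\<lambda>m::nat. if m = 0 then 0 else cl m * (-1) ^ m"
  have LL: "nc_log (nc_one + tt) - nc_log (nc_one - tt) = Phi (\<lambda>m. ?Lp m - ?Lm m)"
    by (simp add: Lplus Lminus Phi_diff)
  have c3: "nc_log sigma1t = nc_log (nc_one + tt) - nc_log (nc_one - tt)"
  proof -
    have "(\<lambda>m. \<Sum>n\<in>{1..m}. cl n * (2 ^ n * of_nat ((m - 1) choose (n - 1)))) = (\<lambda>m. ?Lp m - ?Lm m)"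
    proof
      fix m :: nat
      show "(\<Sum>n\<in>{1..m}. cl n * (2 ^ n * of_nat ((m - 1) choose (n - 1)))) = ?Lp m - ?Lm m"
      proof (cases "m = 0")
        case True then show ?thesis by simp
      next
        case False then show ?thesis using comb[of m] by simp
      qed
    qed
    then show ?thesis by (simp add: Lsig LL)
  qed
  have c4: "nc_log (nc_one + tt) - nc_log (nc_one - tt)
        = nc_smult 2 (nc_sum (\<lambda>k::nat. nc_smult (1 / of_nat (2 * k + 1)) (nc_pow tt (2 * k + 1))))"
  proof -
    have "(\<lambda>m. ?Lp m - ?Lm m) = (\<lambda>m. 2 * oinv m)"
    proof
      fix m :: nat
      show "?Lp m - ?Lm m = 2 * oinv m"
      proof (cases "even m")
        case True then show ?thesis by (simp add: oinv_def)
      next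
        case False then show ?thesis by (auto simp: oinv_def cl_def)
      qed
    qed
    then show ?thesis by (simp only: LL conj4_aux Phi_smult)
  qed
  have c5: "nc_smult 2 (nc_sum (\<lambda>k::nat. nc_smult (1 / of_nat (2 * k + 1)) (nc_pow tt (2 * k + 1))))
        = nc_smult 2 (nc_sum_set {I. (\<forall>i\<in>set I. odd i) \<and> odd (length I)}
             (\<lambda>I. nc_smult ((-1) ^ ((sum_list I - length I) div 2) / of_nat (length I)) (TI I)))"
    by (simp only: conj4_aux conj5_aux)
  show ?thesis using c1 c2 c3 c4 c5 by blast
qed

end
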